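(* Let $N\ge1$, $p,q>0$ with $p+q=1$. Let $P'_{Y'}(X';t)$ be the transition probability of the AZRP with $N$ particles from $Y'$ to $X'$ at time $t$, and $P_Y(X;t)$ the transition probability of the ASEP with $N$ particles from $Y$ to $X$ at time $t$. Define $f(x_1,\dots,x_N)=(x_1+1,x_2+2,\dots,x_N+N)$, a bijection from $\{x_1\le\cdots\le x_N\}\subset\mathbb{Z}^N$ onto $\{x_1<\cdots<x_N\}\subset\mathbb{Z}^N$. Then for all $X',Y'$ with weakly increasing coordinates and all $t\ge0$, $P'_{Y'}(X';t)=P_{f(Y')}(f(X');t)$.
   Context: AZRP: any number of particles may occupy a site of $\mathbb{Z}$; from each occupied site one particle leaves at rate $1$, moving to the right neighbor with probability $p$ and to the left neighbor with probability $q$; configurations are the ordered positions $x_1\le\cdots\le x_N$. ASEP (asymmetric simple exclusion process): at most one particle per site; each particle jumps one step to the right at rate $p$ and one step to the left at rate $q$, a jump being suppressed if the target site is occupied; configurations are $x_1<\cdots<x_N$. *)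

theory Defs
  imports Complex_Main
begin

text \<open>A chain is given by jump rates rate x y (for y different from x) which vanish
outside a finite neighbourhood nb x. Since rates are bounded, the
transition probabilities are the entries of exp(tQ), computed as a power series;
the n-th power of Q is a finite sum over neighbourhoods.\<close>

definition generator :: "('a \<Rightarrow> 'a \<Rightarrow> real) \<Rightarrow> ('a \<Rightarrow> 'a set) \<Rightarrow> 'a \<Rightarrow> 'a \<Rightarrow> real" where
  "generator rate nb x y =
     (if x = y then - (\<Sum>z\<in>nb x - {x}. rate x z) else rate x y)"

fun gen_pow :: "('a \<Rightarrow> 'a \<Rightarrow> real) \<Rightarrow> ('a \<Rightarrow> 'a set) \<Rightarrow> nat \<Rightarrow> 'a \<Rightarrow> 'a \<Rightarrow> real" where
  "gen_pow rate nb 0 x y = (if x = y then 1 else 0)"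
| "gen_pow rate nb (Suc n) x y = (\<Sum>z\<in>nb x. generator rate nb x z * gen_pow rate nb n z y)"

definition trans_prob :: "('a \<Rightarrow> 'a \<Rightarrow> real) \<Rightarrow> ('a \<Rightarrow> 'a set) \<Rightarrow> real \<Rightarrow> 'a \<Rightarrow> 'a \<Rightarrow> real" where
  "trans_prob rate nb t x y = (\<Sum>n. t ^ n / fact n * gen_pow rate nb n x y)"

text \<open>A configuration of N particles is an int list of length N (ordered positions
x_1,...,x_N, indexed 0..N-1 here). One jump moves a single particle by one step.\<close>

definition nbhd :: "int list \<Rightarrow> int list set" where
  "nbhd x = {x} \<union> {x[i := x ! i + 1] | i. i < length x} \<union> {x[i := x ! i - 1] | i. i < length x}"

text \<open>AZRP in ordered coordinates: from each occupied site one particle leaves at rate 1,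
to the right w.p. p, to the left w.p. q. To keep order, the right-moving particle is the
one with the largest index at the site, the left-moving one the smallest index.\<close>
definition azrp_rate :: "real \<Rightarrow> real \<Rightarrow> int list \<Rightarrow> int list \<Rightarrow> real" where
  "azrp_rate p q x y =
    (\<Sum>i<length x.
       (if y = x[i := x ! i + 1] \<and> (Suc i = length x \<or> x ! i < x ! Suc i) then p else 0)
     + (if y = x[i := x ! i - 1] \<and> (i = 0 \<or> x ! (i - 1) < x ! i) then q else 0))"

definition asep_rate :: "real \<Rightarrow> real \<Rightarrow> int list \<Rightarrow> int list \<Rightarrow> real" where
  "asep_rate p q x y =
    (\<Sum>i<length x.
       (if y = x[i := x ! i + 1] \<and> (Suc i = length x \<or> x ! i + 1 < x ! Suc i) then p else 0)
     + (if y = x[i := x ! i - 1] \<and> (i = 0 \<or> x ! (i - 1) < x ! i - 1) then q else 0))"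

definition azrp_prob :: "real \<Rightarrow> real \<Rightarrow> int list \<Rightarrow> int list \<Rightarrow> real \<Rightarrow> real" where
  "azrp_prob p q Y X t = trans_prob (azrp_rate p q) nbhd t Y X"

definition asep_prob :: "real \<Rightarrow> real \<Rightarrow> int list \<Rightarrow> int list \<Rightarrow> real \<Rightarrow> real" where
  "asep_prob p q Y X t = trans_prob (asep_rate p q) nbhd t Y X"

definition shift_conf :: "int list \<Rightarrow> int list" where
  "shift_conf x = map (\<lambda>i. x ! i + int (Suc i)) [0..<length x]"

end

theory Submission
  imports Defs
begin

lemma shift_len[simp]: "length (shift_conf x) = length x"
  by (simp add: shift_conf_def)

lemma shift_nth[simp]: "i < length x \<Longrightarrow> shift_conf x ! i = x ! i + int (Suc i)"
  by (simp add: shift_conf_def)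

lemma shift_inj: "inj shift_conf"
proof (rule injI)
  fix x y assume h: "shift_conf x = shift_conf y"
  hence l: "length x = length y" by (metis shift_len)
  show "x = y"
  proof (rule nth_equalityI)
    show "length x = length y" by (rule l)
    fix i assume "i < length x"
    with h l have "shift_conf x ! i = shift_conf y ! i" by simp
    with \<open>i < length x\<close> l show "x ! i = y ! i" by simp
  qed
qed

lemma shift_eq_iff: "(shift_conf x = shift_conf y) = (x = y)"
  using shift_inj by (auto dest: injD)

lemma shift_upd: "i < length x \<Longrightarrow> shift_conf (x[i := v]) = (shift_conf x)[i := v + int (Suc i)]"
  by (rule nth_equalityI) (auto simp: nth_list_update)

lemma shift_up: "i < length x \<Longrightarrow> (shift_conf x)[i := shift_conf x ! i + 1] = shift_conf (x[i := x ! i + 1])"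
  by (simp add: shift_upd algebra_simps)

lemma shift_dn: "i < length x \<Longrightarrow> (shift_conf x)[i := shift_conf x ! i - 1] = shift_conf (x[i := x ! i - 1])"
  by (simp add: shift_upd algebra_simps)

lemma nbhd_shift: "nbhd (shift_conf x) = shift_conf ` nbhd x"
proof -
  have "nbhd (shift_conf x) = {shift_conf x} \<union> {shift_conf (x[i := x ! i + 1]) | i. i < length x}
     \<union> {shift_conf (x[i := x ! i - 1]) | i. i < length x}"
    unfolding nbhd_def shift_len
    by (smt (verit, best) Collect_cong shift_dn shift_up)
  also have "\<dots> = shift_conf ` nbhd x" unfolding nbhd_def by blast
  finally show ?thesis .
qed

lemma rate_eq: "asep_rate p q (shift_conf x) (shift_conf y) = azrp_rate p q x y"
  unfolding asep_rate_def azrp_rate_def shift_len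
proof (rule sum.cong[OF refl])
  fix i assume "i \<in> {..<length x}"
  hence i: "i < length x" by simp
  have e1: "(shift_conf y = (shift_conf x)[i := shift_conf x ! i + 1]) = (y = x[i := x ! i + 1])"
    using i by (simp only: shift_up shift_eq_iff)
  have e2: "(shift_conf y = (shift_conf x)[i := shift_conf x ! i - 1]) = (y = x[i := x ! i - 1])"
    using i by (simp only: shift_dn shift_eq_iff)
  have c1: "(Suc i = length x \<or> shift_conf x ! i + 1 < shift_conf x ! Suc i) = (Suc i = length x \<or> x ! i < x ! Suc i)"
    using i by (cases "Suc i = length x") auto
  have c2: "(i = 0 \<or> shift_conf x ! (i - 1) < shift_conf x ! i - 1) = (i = 0 \<or> x ! (i - 1) < x ! i)"
    using i by (cases i) auto
  show "(if shift_conf y = (shift_conf x)[i := shift_conf x ! i + 1] \<and> (Suc i = length x \<or> shift_conf x ! i + 1 < shift_conf x ! Suc i) then p else 0) +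
         (if shift_conf y = (shift_conf x)[i := shift_conf x ! i - 1] \<and> (i = 0 \<or> shift_conf x ! (i - 1) < shift_conf x ! i - 1) then q else 0) =
         (if y = x[i := x ! i + 1] \<and> (Suc i = length x \<or> x ! i < x ! Suc i) then p else 0) +
         (if y = x[i := x ! i - 1] \<and> (i = 0 \<or> x ! (i - 1) < x ! i) then q else 0)"
    by (simp only: e1 e2 c1 c2)
qed

lemma gen_eq: "generator (asep_rate p q) nbhd (shift_conf x) (shift_conf y) = generator (azrp_rate p q) nbhd x y"
proof -
  have "(\<Sum>z\<in>nbhd (shift_conf x) - {shift_conf x}. asep_rate p q (shift_conf x) z)
      = (\<Sum>z\<in>shift_conf ` (nbhd x - {x}). asep_rate p q (shift_conf x) z)"
    by (simp add: nbhd_shift image_set_diff[OF shift_inj])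
  also have "\<dots> = (\<Sum>z\<in>nbhd x - {x}. azrp_rate p q x z)"
    by (subst sum.reindex) (auto intro: inj_on_subset[OF shift_inj] simp: rate_eq)
  finally show ?thesis unfolding generator_def by (cases "x = y") (simp_all add: shift_eq_iff rate_eq)
qed

lemma gp_eq: "gen_pow (asep_rate p q) nbhd n (shift_conf x) (shift_conf y) = gen_pow (azrp_rate p q) nbhd n x y"
proof (induction n arbitrary: x)
  case 0 thus ?case by (simp add: shift_eq_iff)
next
  case (Suc n)
  have "gen_pow (asep_rate p q) nbhd (Suc n) (shift_conf x) (shift_conf y)
     = (\<Sum>z\<in>shift_conf ` nbhd x. generator (asep_rate p q) nbhd (shift_conf x) z * gen_pow (asep_rate p q) nbhd n z (shift_conf y))"
    by (simp add: nbhd_shift)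
  also have "\<dots> = (\<Sum>z\<in>nbhd x. generator (azrp_rate p q) nbhd x z * gen_pow (azrp_rate p q) nbhd n z y)"
    by (subst sum.reindex) (auto intro: inj_on_subset[OF shift_inj] simp: gen_eq Suc.IH)
  finally show ?case by simp
qed

theorem mainTheorem3:
  fixes N :: nat and p q t :: real and X Y :: "int list"
  assumes "N \<ge> 1" and "p > 0" and "q > 0" and "p + q = 1"
    and "length X = N" and "length Y = N" and "sorted X" and "sorted Y"
    and "t \<ge> 0"
  shows "azrp_prob p q Y X t = asep_prob p q (shift_conf Y) (shift_conf X) t"
  unfolding azrp_prob_def asep_prob_def trans_prob_def by (simp add: gp_eq)

end
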